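(* Let $V$ be a finite-dimensional complex vector space and let $A(u),A'(u):\mathbb C\to GL(V)$ be rational functions, both of the form $1+A_0u^{-1}+O(u^{-2})$ near $\infty$ (with the same $A_0$), such that the difference equations $\phi(u+1)=A(u)\phi(u)$ and $\phi(u+1)=A'(u)\phi(u)$ admit canonical fundamental solutions and have equal connection matrices. Let $\mathcal P,\mathcal Z\subset\mathbb C$ be the sets of poles of $A(u)$ and $A(u)^{-1}$, and $\mathcal P',\mathcal Z'$ those of $A'(u)$ and $A'(u)^{-1}$. If each of the pairs $(\mathcal Z,\mathcal P)$, $(\mathcal Z',\mathcal P')$, $(\mathcal Z,\mathcal Z')$, $(\mathcal P,\mathcal P')$ is non-congruent, then $A=A'$.
   Context: Two subsets $X,Y\subset\mathbb C$ are non-congruent if $x-y\notin\mathbb Z\setminus\{0\}$ for all $x\in X$, $y\in Y$. For a rational $A(u)=1+A_0u^{-1}+\cdots$, canonical fundamental solutions of $\phi(u+1)=A(u)\phi(u)$ are meromorphic solutions $\phi^\pm:\mathbb C\to\mathrm{End}(V)$ that are holomorphic and invertible for $\pm\mathrm{Re}(u)\gg0$ and have asymptotic expansions $\phi^\pm(u)\sim(1+H^\pm_0u^{-1}+H^\pm_1u^{-2}+\cdots)(\pm u)^{A_0}$ in every right (resp. left) half-plane (principal branch of $\log$); they exist and are unique when the system is non-resonant (e.g. when all $A(u)$ commute). The connection matrix is $S(u)=\phi^+(u)^{-1}\phi^-(u)$. *)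

theory Defs
  imports "HOL-Complex_Analysis.Complex_Analysis" "HOL-Computational_Algebra.Polynomial"
begin

text \<open>End(V) for V = complex^'n is represented by complex^'n^'n, composition by **.\<close>

type_synonym 'n cmat = "complex ^ 'n ^ 'n"

definition smat :: "complex \<Rightarrow> 'n cmat \<Rightarrow> 'n::finite cmat" where
  "smat c M = (\<chi> i j. c * M $ i $ j)"

fun matpow :: "'n::finite cmat \<Rightarrow> nat \<Rightarrow> 'n cmat" where
  "matpow M 0 = mat 1"
| "matpow M (Suc k) = M ** matpow M k"

definition mexp :: "'n::finite cmat \<Rightarrow> 'n cmat" where
  "mexp M = (\<Sum>k. smat (1 / of_nat (fact k)) (matpow M k))"

text \<open>Rational scalar function (values at the zeros of the denominator are irrelevant).\<close>
definition rational_fun :: "(complex \<Rightarrow> complex) \<Rightarrow> bool" where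
  "rational_fun f \<longleftrightarrow> (\<exists>p q. q \<noteq> 0 \<and> (\<forall>u. poly q u \<noteq> 0 \<longrightarrow> f u = poly p u / poly q u))"

definition rational_GL :: "(complex \<Rightarrow> 'n::finite cmat) \<Rightarrow> bool" where
  "rational_GL A \<longleftrightarrow> (\<forall>i j. rational_fun (\<lambda>u. A u $ i $ j)) \<and> finite {u. \<not> invertible (A u)}"

definition normalized_at_infty :: "(complex \<Rightarrow> 'n::finite cmat) \<Rightarrow> 'n cmat \<Rightarrow> bool" where
  "normalized_at_infty A A0 \<longleftrightarrow>
     (\<exists>C. \<forall>\<^sub>F u in at_infinity. norm (A u - mat 1 - smat (1 / u) A0) \<le> C / norm u ^ 2)"

definition poles_mat :: "(complex \<Rightarrow> 'n::finite cmat) \<Rightarrow> complex set" where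
  "poles_mat A = {z. \<exists>i j. is_pole (\<lambda>u. A u $ i $ j) z}"

definition noncongruent :: "complex set \<Rightarrow> complex set \<Rightarrow> bool" where
  "noncongruent X Y \<longleftrightarrow> (\<forall>x\<in>X. \<forall>y\<in>Y. x - y \<notin> \<int> - {0})"

definition mat_meromorphic :: "(complex \<Rightarrow> 'n::finite cmat) \<Rightarrow> bool" where
  "mat_meromorphic \<phi> \<longleftrightarrow> (\<forall>i j. (\<lambda>u. \<phi> u $ i $ j) meromorphic_on UNIV)"

text \<open>Equality of meromorphic functions: equal in a punctured neighbourhood of every point.\<close>
definition mero_eq :: "(complex \<Rightarrow> 'n::finite cmat) \<Rightarrow> (complex \<Rightarrow> 'n cmat) \<Rightarrow> bool" where
  "mero_eq f g \<longleftrightarrow> (\<forall>z. \<forall>\<^sub>F u in at z. f u = g u)"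

definition solves_diff_eq :: "(complex \<Rightarrow> 'n::finite cmat) \<Rightarrow> (complex \<Rightarrow> 'n cmat) \<Rightarrow> bool" where
  "solves_diff_eq A \<phi> \<longleftrightarrow> mat_meromorphic \<phi> \<and> mero_eq (\<lambda>u. \<phi> (u + 1)) (\<lambda>u. A u ** \<phi> u)"

definition canonical_plus :: "(complex \<Rightarrow> 'n::finite cmat) \<Rightarrow> 'n cmat \<Rightarrow> (complex \<Rightarrow> 'n cmat) \<Rightarrow> bool" where
  "canonical_plus A A0 \<phi> \<longleftrightarrow> solves_diff_eq A \<phi> \<and>
     (\<exists>c. (\<forall>i j. (\<lambda>u. \<phi> u $ i $ j) holomorphic_on {u. Re u > c}) \<and>
          (\<forall>u. Re u > c \<longrightarrow> invertible (\<phi> u))) \<and>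
     (\<exists>H :: nat \<Rightarrow> 'n cmat. \<forall>c. \<forall>N. \<exists>C.
        \<forall>\<^sub>F u in inf at_infinity (principal {u. Re u > c}).
          norm (\<phi> u ** mexp (smat (- Ln u) A0)
                - (mat 1 + (\<Sum>k<N. smat (1 / u ^ (k + 1)) (H k)))) \<le> C / norm u ^ (N + 1))"

definition canonical_minus :: "(complex \<Rightarrow> 'n::finite cmat) \<Rightarrow> 'n cmat \<Rightarrow> (complex \<Rightarrow> 'n cmat) \<Rightarrow> bool" where
  "canonical_minus A A0 \<phi> \<longleftrightarrow> solves_diff_eq A \<phi> \<and>
     (\<exists>c. (\<forall>i j. (\<lambda>u. \<phi> u $ i $ j) holomorphic_on {u. Re u < c}) \<and>
          (\<forall>u. Re u < c \<longrightarrow> invertible (\<phi> u))) \<and>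
     (\<exists>H :: nat \<Rightarrow> 'n cmat. \<forall>c. \<forall>N. \<exists>C.
        \<forall>\<^sub>F u in inf at_infinity (principal {u. Re u < c}).
          norm (\<phi> u ** mexp (smat (- Ln (- u)) A0)
                - (mat 1 + (\<Sum>k<N. smat (1 / u ^ (k + 1)) (H k)))) \<le> C / norm u ^ (N + 1))"

definition connection :: "(complex \<Rightarrow> 'n::finite cmat) \<Rightarrow> (complex \<Rightarrow> 'n cmat) \<Rightarrow> complex \<Rightarrow> 'n cmat" where
  "connection \<phi>p \<phi>m u = matrix_inv (\<phi>p u) ** \<phi>m u"

end

theory Submission
  imports Defs
begin


no_notation Formal_Power_Series.fps_nth (infixl \<open>$\<close> 75)

definition good :: "(complex \<Rightarrow> complex) \<Rightarrow> complex \<Rightarrow> bool" where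
  "good f z \<longleftrightarrow> (\<exists>g. g analytic_on {z} \<and> (\<forall>\<^sub>F u in at z. f u = g u))"

definition mgood :: "(complex \<Rightarrow> 'n::finite cmat) \<Rightarrow> complex \<Rightarrow> bool" where
  "mgood F z \<longleftrightarrow> (\<forall>i j. good (\<lambda>u. F u $ i $ j) z)"

lemma good_cong:
  assumes "\<forall>\<^sub>F u in at z. f u = h u" "good h z" shows "good f z"
proof -
  from assms(2) obtain g where g: "g analytic_on {z}" "\<forall>\<^sub>F u in at z. h u = g u"
    unfolding good_def by blast
  have "\<forall>\<^sub>F u in at z. f u = g u" using assms(1) g(2) by eventually_elim auto
  then show ?thesis using g(1) unfolding good_def by blast
qed

lemma good_analytic: "f analytic_on {z} \<Longrightarrow> good f z"
  unfolding good_def by auto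

lemma good_const: "good (\<lambda>_. c) z"
  by (rule good_analytic) auto

lemma good_add:
  assumes "good f z" "good h z" shows "good (\<lambda>u. f u + h u) z"
proof -
  from assms obtain g1 g2 where g: "g1 analytic_on {z}" "\<forall>\<^sub>F u in at z. f u = g1 u"
     "g2 analytic_on {z}" "\<forall>\<^sub>F u in at z. h u = g2 u"
    unfolding good_def by blast
  have "\<forall>\<^sub>F u in at z. f u + h u = g1 u + g2 u" using g(2,4) by eventually_elim auto
  moreover have "(\<lambda>u. g1 u + g2 u) analytic_on {z}" using g(1,3) by (intro analytic_intros)
  ultimately show ?thesis unfolding good_def by blast
qed

lemma good_mult:
  assumes "good f z" "good h z" shows "good (\<lambda>u. f u * h u) z"
proof -
  from assms obtain g1 g2 where g: "g1 analytic_on {z}" "\<forall>\<^sub>F u in at z. f u = g1 u"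
     "g2 analytic_on {z}" "\<forall>\<^sub>F u in at z. h u = g2 u"
    unfolding good_def by blast
  have "\<forall>\<^sub>F u in at z. f u * h u = g1 u * g2 u" using g(2,4) by eventually_elim auto
  moreover have "(\<lambda>u. g1 u * g2 u) analytic_on {z}" using g(1,3) by (intro analytic_intros)
  ultimately show ?thesis unfolding good_def by blast
qed

lemma good_sum:
  assumes "finite I" "\<And>i. i \<in> I \<Longrightarrow> good (f i) z" shows "good (\<lambda>u. \<Sum>i\<in>I. f i u) z"
  using assms
proof (induction I rule: finite_induct)
  case empty then show ?case by (simp add: good_const)
next
  case (insert x F) then show ?case by (simp add: good_add)
qed

lemma good_shift:
  assumes "good f (z + c)" shows "good (\<lambda>u. f (u + c)) z"
proof -
  from assms obtain g where g: "g analytic_on {z + c}" "\<forall>\<^sub>F u in at (z + c). f u = g u"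
    unfolding good_def by blast
  have "(g \<circ> (\<lambda>u. u + c)) analytic_on {z}"
    by (rule analytic_on_compose) (use g(1) in \<open>auto intro!: analytic_intros\<close>)
  moreover have "\<forall>\<^sub>F u in at z. f (u + c) = g (u + c)"
  proof -
    from g(2) obtain d where d: "d > 0" "\<And>x. x \<noteq> z + c \<Longrightarrow> dist x (z + c) < d \<Longrightarrow> f x = g x"
      unfolding eventually_at by blast
    show ?thesis unfolding eventually_at
      by (rule exI[of _ d]) (use d in \<open>auto simp: dist_norm\<close>)
  qed
  ultimately show ?thesis unfolding good_def o_def by blast
qed

lemma good_mero:
  assumes "f meromorphic_on {z}" "\<not> is_pole f z" shows "good f z"
proof -
  have iso: "isolated_singularity_at f z" and ne: "not_essential f z"
    using assms(1) by (auto simp: meromorphic_at_iff)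
  then obtain c where c: "f \<midarrow>z\<rightarrow> c" using assms(2) unfolding not_essential_def by blast
  have "remove_sings f analytic_on {z}" by (rule remove_sings_analytic_at[OF iso c])
  moreover have "\<forall>\<^sub>F u in at z. f u = remove_sings f u"
    using eventually_remove_sings_eq_at[OF iso] by eventually_elim auto
  ultimately show ?thesis unfolding good_def by blast
qed

lemma mgood_cong:
  assumes "\<forall>\<^sub>F u in at z. F u = H u" "mgood H z" shows "mgood F z"
  unfolding mgood_def
proof (intro allI)
  fix i j
  have ev: "\<forall>\<^sub>F u in at z. F u $ i $ j = H u $ i $ j" using assms(1) by eventually_elim simp
  show "good (\<lambda>u. F u $ i $ j) z" by (rule good_cong[OF ev]) (use assms(2) in \<open>simp add: mgood_def\<close>)
qed

lemma mgood_mult: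
  fixes F G :: "complex \<Rightarrow> 'n::finite cmat"
  assumes "mgood F z" "mgood G z" shows "mgood (\<lambda>u. F u ** G u) z"
  unfolding mgood_def
proof (intro allI)
  fix i j
  have "good (\<lambda>u. \<Sum>k\<in>UNIV. F u $ i $ k * G u $ k $ j) z"
    using assms unfolding mgood_def by (intro good_sum good_mult) auto
  then show "good (\<lambda>u. (F u ** G u) $ i $ j) z"
    by (simp add: matrix_matrix_mult_def)
qed

lemma mgood_shift:
  assumes "mgood F (z + c)" shows "mgood (\<lambda>u. F (u + c)) z"
  using assms good_shift unfolding mgood_def by blast

lemma mgood_analytic:
  fixes F :: "complex \<Rightarrow> 'n::finite cmat"
  assumes "\<And>i j. (\<lambda>u. F u $ i $ j) analytic_on {z}" shows "mgood F z"
  using assms good_analytic unfolding mgood_def by blast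



lemma inv_props:
  fixes X :: "'a::semiring_1^'n^'n"
  assumes "invertible X" shows "X ** matrix_inv X = mat 1" "matrix_inv X ** X = mat 1"
proof -
  from assms have "\<exists>A'. X ** A' = mat 1 \<and> A' ** X = mat 1" unfolding invertible_def by blast
  then have "X ** matrix_inv X = mat 1 \<and> matrix_inv X ** X = mat 1"
    unfolding matrix_inv_def by (rule someI_ex)
  then show "X ** matrix_inv X = mat 1" "matrix_inv X ** X = mat 1" by auto
qed

definition cram :: "'a::field^'n^'n \<Rightarrow> 'n \<Rightarrow> 'n \<Rightarrow> 'a" where
  "cram X k j = det (\<chi> a b. if b = k then (if a = j then 1 else 0) else X $ a $ b)"

lemma matrix_inv_formula:
  fixes X :: "'a::field^'n::finite^'n"
  assumes "invertible X" shows "matrix_inv X $ k $ j = cram X k j / det X"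
proof -
  define x where "x = (\<chi> k. matrix_inv X $ k $ j)"
  define b :: "'a^'n" where "b = (\<chi> i. if i = j then 1 else 0)"
  have "X *v x = (X ** matrix_inv X) *v b"
    by (simp add: x_def b_def vec_eq_iff matrix_vector_mult_def matrix_matrix_mult_def
        if_distrib sum.delta' cong: if_cong)
  also have "\<dots> = b" using inv_props[OF assms] by simp
  finally have "X *v x = b" .
  moreover have "det X \<noteq> 0" using assms invertible_det_nz by blast
  ultimately have "x = (\<chi> k. det(\<chi> i j. if j=k then b$i else X$i$j) / det X)"
    using cramer by blast
  then have "x $ k = det(\<chi> i j. if j=k then b$i else X$i$j) / det X" by simp
  moreover have "(\<chi> i j'. if j'=k then b$i else X$i$j') = (\<chi> a b'. if b' = k then (if a = j then 1 else 0) else X$a$b')"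
    by (simp add: b_def vec_eq_iff)
  ultimately show ?thesis by (simp add: x_def cram_def)
qed

lemma det_expand: "det (A::'a::comm_ring_1^'n::finite^'n) =
   (\<Sum>p\<in>{p. p permutes (UNIV::'n set)}. of_int (sign p) * (\<Prod>i\<in>UNIV. A $ i $ p i))"
  by (simp add: det_def)

lemma det_holo:
  fixes F :: "complex \<Rightarrow> complex^'n::finite^'n"
  assumes "\<And>i j. (\<lambda>u. F u $ i $ j) holomorphic_on S" shows "(\<lambda>u. det (F u)) holomorphic_on S"
  unfolding det_expand by (intro holomorphic_intros assms)

lemma det_mero:
  fixes F :: "complex \<Rightarrow> complex^'n::finite^'n"
  assumes "\<And>i j. (\<lambda>u. F u $ i $ j) meromorphic_on S" shows "(\<lambda>u. det (F u)) meromorphic_on S"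
  unfolding det_expand by (intro meromorphic_intros assms)

lemma cram_holo:
  fixes F :: "complex \<Rightarrow> complex^'n::finite^'n"
  assumes "\<And>i j. (\<lambda>u. F u $ i $ j) holomorphic_on S" shows "(\<lambda>u. cram (F u) k j) holomorphic_on S"
  unfolding cram_def by (rule det_holo) (case_tac "ja = k"; case_tac "i = j"; simp add: assms)

lemma cram_mero:
  fixes F :: "complex \<Rightarrow> complex^'n::finite^'n"
  assumes "\<And>i j. (\<lambda>u. F u $ i $ j) meromorphic_on S" shows "(\<lambda>u. cram (F u) k j) meromorphic_on S"
  unfolding cram_def by (rule det_mero) (case_tac "ja = k"; case_tac "i = j"; simp add: assms meromorphic_on_const)

lemma inv_holo:
  fixes F :: "complex \<Rightarrow> complex^'n::finite^'n"
  assumes "\<And>i j. (\<lambda>u. F u $ i $ j) holomorphic_on S" "\<And>u. u \<in> S \<Longrightarrow> invertible (F u)"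
  shows "(\<lambda>u. matrix_inv (F u) $ k $ j) holomorphic_on S"
proof -
  have "(\<lambda>u. cram (F u) k j / det (F u)) holomorphic_on S"
    using assms by (intro holomorphic_intros cram_holo det_holo) (auto simp: invertible_det_nz)
  then show ?thesis
    by (rule holomorphic_transform) (simp add: assms(2) matrix_inv_formula)
qed

lemma inv_mero:
  fixes F :: "complex \<Rightarrow> complex^'n::finite^'n"
  assumes "\<And>i j. (\<lambda>u. F u $ i $ j) meromorphic_on UNIV" "\<And>z. \<forall>\<^sub>F u in at z. invertible (F u)"
  shows "(\<lambda>u. matrix_inv (F u) $ k $ j) meromorphic_on UNIV"
proof -
  have "(\<lambda>u. cram (F u) k j / det (F u)) meromorphic_on UNIV"
    using assms by (intro meromorphic_intros cram_mero det_mero)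
  moreover have "(\<lambda>u. matrix_inv (F u) $ k $ j) meromorphic_on UNIV \<longleftrightarrow> (\<lambda>u. cram (F u) k j / det (F u)) meromorphic_on UNIV"
  proof (rule meromorphic_on_cong[OF _ refl])
    fix z :: complex
    show "\<forall>\<^sub>F u in at z. matrix_inv (F u) $ k $ j = cram (F u) k j / det (F u)"
      using assms(2)[of z] by eventually_elim (simp add: matrix_inv_formula)
  qed
  ultimately show ?thesis by blast
qed

lemma norm_le_sum_nth: "norm (x::'a::real_normed_vector^'n::finite) \<le> (\<Sum>i\<in>UNIV. norm (x $ i))"
  unfolding norm_vec_def by (rule L2_set_le_sum) auto

lemma norm_entry_le: "norm ((A::complex^'n::finite^'m::finite) $ i $ j) \<le> norm A"
proof -
  have "norm (A $ i $ j) \<le> norm (A $ i)" unfolding norm_vec_def by (rule member_le_L2_set) auto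
  also have "\<dots> \<le> norm A" unfolding norm_vec_def[of A] by (rule member_le_L2_set) auto
  finally show ?thesis .
qed

lemma norm_matmul_le:
  fixes A B :: "complex^'n::finite^'n"
  shows "norm (A ** B) \<le> real (CARD('n))^3 * norm A * norm B"
proof -
  have e: "norm ((A ** B) $ i $ j) \<le> real (CARD('n)) * (norm A * norm B)" for i j
  proof -
    have "norm ((A ** B) $ i $ j) = norm (\<Sum>k\<in>UNIV. A $ i $ k * B $ k $ j)"
      by (simp add: matrix_matrix_mult_def)
    also have "\<dots> \<le> (\<Sum>k\<in>UNIV. norm (A $ i $ k * B $ k $ j))" by (rule norm_sum)
    also have "\<dots> \<le> (\<Sum>k\<in>(UNIV::'n set). norm A * norm B)"
      by (intro sum_mono) (auto simp: norm_mult intro!: mult_mono norm_entry_le)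
    finally show ?thesis by simp
  qed
  have "norm (A ** B) \<le> (\<Sum>i\<in>UNIV. norm ((A ** B) $ i))" by (rule norm_le_sum_nth)
  also have "\<dots> \<le> (\<Sum>i\<in>(UNIV::'n set). \<Sum>j\<in>(UNIV::'n set). norm ((A ** B) $ i $ j))"
    by (intro sum_mono norm_le_sum_nth)
  also have "\<dots> \<le> (\<Sum>i\<in>(UNIV::'n set). \<Sum>j\<in>(UNIV::'n set). real (CARD('n)) * (norm A * norm B))"
    by (intro sum_mono e)
  also have "\<dots> = real (CARD('n))^3 * norm A * norm B"
    by (simp add: power3_eq_cube mult_ac)
  finally show ?thesis .
qed



lemma ev_not_in_finite: "finite T \<Longrightarrow> \<forall>\<^sub>F u in at (z::complex). u \<notin> T"
  using islimpt_finite islimpt_iff_eventually by blast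

lemma ev_invertible:
  fixes \<phi> :: "complex \<Rightarrow> complex^'n::finite^'n"
  assumes "\<And>i j. (\<lambda>u. \<phi> u $ i $ j) meromorphic_on UNIV" "open S" "s \<in> S"
    "\<And>u. u \<in> S \<Longrightarrow> invertible (\<phi> u)"
  shows "\<forall>\<^sub>F u in at z. invertible (\<phi> u)"
proof -
  have m: "(\<lambda>u. det (\<phi> u)) meromorphic_on UNIV" by (rule det_mero) (rule assms(1))
  have "eventually (\<lambda>u. det (\<phi> u) = 0) (cosparse UNIV) \<or> eventually (\<lambda>u. det (\<phi> u) \<noteq> 0) (cosparse UNIV)"
    by (rule meromorphic_imp_constant_or_avoid[OF m open_UNIV connected_UNIV])
  moreover have "\<not> eventually (\<lambda>u. det (\<phi> u) = 0) (cosparse UNIV)"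
  proof
    assume "eventually (\<lambda>u. det (\<phi> u) = 0) (cosparse UNIV)"
    then have "\<forall>\<^sub>F u in at s. det (\<phi> u) = 0"
      using eventually_cosparse_imp_eventually_at[of _ UNIV s UNIV] by auto
    moreover have "\<forall>\<^sub>F u in at s. u \<in> S" using assms(2,3) by (rule eventually_at_in_open')
    ultimately have "\<forall>\<^sub>F u in at s. False"
      by eventually_elim (use assms(4) invertible_det_nz in blast)
    then show False by (simp add: eventually_False)
  qed
  ultimately have "eventually (\<lambda>u. det (\<phi> u) \<noteq> 0) (cosparse UNIV)" by blast
  then have "\<forall>\<^sub>F u in at z. det (\<phi> u) \<noteq> 0"
    using eventually_cosparse_imp_eventually_at[of _ UNIV z UNIV] by auto
  then show ?thesis by eventually_elim (simp add: invertible_det_nz)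
qed

lemma poly_analytic: "(\<lambda>u. poly p (u::complex)) analytic_on S"
  unfolding poly_altdef by (intro analytic_intros)

lemma rational_ev:
  assumes "rational_fun f"
  shows "\<exists>p q. q \<noteq> 0 \<and> (\<forall>z. \<forall>\<^sub>F u in at z. f u = poly p u / poly q u)"
proof -
  from assms obtain p q where pq: "q \<noteq> 0" "\<And>u. poly q u \<noteq> 0 \<Longrightarrow> f u = poly p u / poly q u"
    unfolding rational_fun_def by blast
  have "finite {u. poly q u = 0}" using pq(1) by (rule poly_roots_finite)
  then have "\<forall>\<^sub>F u in at z. u \<notin> {u. poly q u = 0}" for z by (rule ev_not_in_finite)
  then have ev: "\<forall>\<^sub>F u in at z. f u = poly p u / poly q u" for z
    by eventually_elim (use pq in auto)
  show ?thesis using pq(1) ev by blast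
qed

lemma rational_mero:
  assumes "rational_fun f" shows "f meromorphic_on UNIV"
proof -
  obtain p q where pq: "q \<noteq> 0" "\<And>z. \<forall>\<^sub>F u in at z. f u = poly p u / poly q u"
    using rational_ev[OF assms] by blast
  have "(\<lambda>u. poly p u / poly q u) meromorphic_on UNIV"
    by (intro meromorphic_on_divide analytic_on_imp_meromorphic_on poly_analytic)
  moreover have "f meromorphic_on UNIV \<longleftrightarrow> (\<lambda>u. poly p u / poly q u) meromorphic_on UNIV"
    by (rule meromorphic_on_cong[OF _ refl]) (use pq in auto)
  ultimately show ?thesis by blast
qed

lemma rational_GL_mero:
  "rational_GL A \<Longrightarrow> (\<lambda>u. A u $ i $ j) meromorphic_on UNIV"
  unfolding rational_GL_def using rational_mero by blast

lemma rational_GL_ev_inv: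
  "rational_GL A \<Longrightarrow> \<forall>\<^sub>F u in at z. invertible (A u)"
  unfolding rational_GL_def using ev_not_in_finite[of "{u. \<not> invertible (A u)}" z] by auto

lemma rational_GL_inv_mero:
  fixes A :: "complex \<Rightarrow> complex^'n::finite^'n"
  shows "rational_GL A \<Longrightarrow> (\<lambda>u. matrix_inv (A u) $ i $ j) meromorphic_on UNIV"
  by (intro inv_mero rational_GL_mero rational_GL_ev_inv)

lemma mgood_nopole:
  fixes F :: "complex \<Rightarrow> complex^'n::finite^'n"
  assumes "\<And>i j. (\<lambda>u. F u $ i $ j) meromorphic_on UNIV" "z \<notin> poles_mat F"
  shows "mgood F z"
  unfolding mgood_def
proof (intro allI)
  fix i j
  show "good (\<lambda>u. F u $ i $ j) z"
  proof (rule good_mero)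
    show "(\<lambda>u. F u $ i $ j) meromorphic_on {z}" by (rule meromorphic_on_subset[OF assms(1)]) simp
    show "\<not> is_pole (\<lambda>u. F u $ i $ j) z" using assms(2) unfolding poles_mat_def by blast
  qed
qed



lemma alg_conn:
  fixes P Q R T :: "'a::field^'n::finite^'n"
  assumes "invertible P" "invertible Q" "invertible R"
    "matrix_inv P ** R = matrix_inv Q ** T"
  shows "Q ** matrix_inv P = T ** matrix_inv R"
proof -
  have "Q ** matrix_inv P = Q ** matrix_inv P ** (R ** matrix_inv R)"
    using inv_props[OF assms(3)] by simp
  also have "\<dots> = Q ** (matrix_inv P ** R) ** matrix_inv R" by (simp add: matrix_mul_assoc)
  also have "\<dots> = (Q ** matrix_inv Q) ** T ** matrix_inv R" by (simp add: assms(4) matrix_mul_assoc)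
  also have "\<dots> = T ** matrix_inv R" using inv_props[OF assms(2)] by simp
  finally show ?thesis .
qed

lemma right_inv_unique:
  fixes X Y Z :: "'a::field^'n::finite^'n"
  assumes "invertible Y" "X ** Y = Z" shows "X = Z ** matrix_inv Y"
proof -
  have "X = X ** (Y ** matrix_inv Y)" using inv_props[OF assms(1)] by simp
  also have "\<dots> = (X ** Y) ** matrix_inv Y" by (simp add: matrix_mul_assoc)
  also have "\<dots> = Z ** matrix_inv Y" by (simp add: assms(2))
  finally show ?thesis .
qed

lemma alg_rec:
  fixes P Q P1 Q1 A A' :: "'a::field^'n::finite^'n"
  assumes "invertible P" "invertible P1" "invertible A" "invertible A'"
    "P1 = A ** P" "Q1 = A' ** Q"
  shows "Q1 ** matrix_inv P1 = A' ** (Q ** matrix_inv P) ** matrix_inv A"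
    "Q ** matrix_inv P = matrix_inv A' ** (Q1 ** matrix_inv P1) ** A"
proof -
  have "(A' ** (Q ** matrix_inv P) ** matrix_inv A) ** P1
        = A' ** Q ** (matrix_inv P ** (matrix_inv A ** A) ** P)"
    by (simp add: assms(5) matrix_mul_assoc)
  also have "\<dots> = Q1" using inv_props[OF assms(1)] inv_props[OF assms(3)] assms(6) by simp
  finally have e: "Q1 ** matrix_inv P1 = A' ** (Q ** matrix_inv P) ** matrix_inv A"
    using right_inv_unique[OF assms(2)] by metis
  then show "Q1 ** matrix_inv P1 = A' ** (Q ** matrix_inv P) ** matrix_inv A" .
  have "matrix_inv A' ** (Q1 ** matrix_inv P1) ** A
     = (matrix_inv A' ** A') ** (Q ** matrix_inv P) ** (matrix_inv A ** A)"
    by (simp add: e matrix_mul_assoc)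
  also have "\<dots> = Q ** matrix_inv P" using inv_props[OF assms(3)] inv_props[OF assms(4)] by simp
  finally show "Q ** matrix_inv P = matrix_inv A' ** (Q1 ** matrix_inv P1) ** A" by simp
qed

lemma lin_aux: "(x::real) \<le> a + y \<Longrightarrow> y \<le> 1/2 * x \<Longrightarrow> x \<le> 2*a" by linarith

lemma alg_bound:
  fixes P Q X :: "complex^'n::finite^'n"
  assumes "invertible P" "norm (P ** X - mat 1) \<le> e1" "norm (Q ** X - mat 1) \<le> e2"
    "real (CARD('n))^3 * e1 \<le> 1/2"
  shows "norm (Q ** matrix_inv P - mat 1) \<le> 2 * (e2 + real (CARD('n))^3 * norm (mat 1 :: complex^'n^'n) * e1)"
proof -
  define K where "K = real (CARD('n))^3"
  define N where "N = Q ** matrix_inv P"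
  define E1 where "E1 = P ** X - mat 1"
  define E2 where "E2 = Q ** X - mat 1"
  have "N ** (P ** X) = Q ** (matrix_inv P ** P) ** X"
    by (simp add: N_def matrix_mul_assoc)
  then have "N ** (P ** X) = Q ** X"
    using inv_props[OF assms(1)] by simp
  then have "N ** (mat 1 + E1) = mat 1 + E2" by (simp add: E1_def E2_def)
  then have "N + N ** E1 = mat 1 + E2" by (simp add: matrix_add_ldistrib)
  then have eq: "N - mat 1 = E2 - N ** E1" by (simp add: algebra_simps)
  have K0: "K \<ge> 0" by (simp add: K_def)
  have "norm (N - mat 1) \<le> norm E2 + norm (N ** E1)" unfolding eq by (rule norm_triangle_ineq4)
  also have "norm (N ** E1) \<le> K * norm N * norm E1" unfolding K_def by (rule norm_matmul_le)
  also have "norm N \<le> norm (mat 1 :: complex^'n^'n) + norm (N - mat 1)"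
    by (metis add.commute diff_add_cancel norm_triangle_ineq)
  finally have "norm (N - mat 1) \<le> norm E2 + K * (norm (mat 1 :: complex^'n^'n) + norm (N - mat 1)) * norm E1"
    using K0 by (simp add: mult_right_mono mult_left_mono)
  also have "\<dots> \<le> e2 + K * (norm (mat 1 :: complex^'n^'n) + norm (N - mat 1)) * e1"
    using assms(2,3) K0 by (intro add_mono mult_left_mono) (auto simp: E1_def E2_def)
  finally have "norm (N - mat 1) \<le> e2 + K * norm (mat 1 :: complex^'n^'n) * e1 + (K * e1) * norm (N - mat 1)"
    by (simp add: algebra_simps)
  moreover have "(K * e1) * norm (N - mat 1) \<le> 1/2 * norm (N - mat 1)"
    using assms(4) by (intro mult_right_mono) (auto simp: K_def)
  ultimately have "norm (N - mat 1) \<le> 2 * (e2 + K * norm (mat 1 :: complex^'n^'n) * e1)"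
    using lin_aux by blast
  then show ?thesis unfolding N_def K_def .
qed



lemma ev_shift:
  assumes "\<forall>\<^sub>F u in at (z + c). Pr u" shows "\<forall>\<^sub>F u in at (z::complex). Pr (u + c)"
proof -
  from assms obtain d where d: "d > 0" "\<And>x. x \<noteq> z + c \<Longrightarrow> dist x (z + c) < d \<Longrightarrow> Pr x"
    unfolding eventually_at by blast
  show ?thesis unfolding eventually_at
    by (rule exI[of _ d]) (use d in \<open>auto simp: dist_norm\<close>)
qed

lemma matprod_holo:
  fixes F G :: "complex \<Rightarrow> complex^'n::finite^'n"
  assumes "\<And>i j. (\<lambda>u. F u $ i $ j) holomorphic_on S" "\<And>i j. (\<lambda>u. G u $ i $ j) holomorphic_on S"
  shows "(\<lambda>u. (F u ** G u) $ i $ j) holomorphic_on S"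
  unfolding matrix_matrix_mult_def by (simp, intro holomorphic_intros assms)

lemma step_right:
  fixes M Ai A :: "complex \<Rightarrow> complex^'n::finite^'n"
  assumes "\<forall>\<^sub>F u in at z. M u = Ai u ** M (u+1) ** A u" "mgood M (z+1)" "mgood Ai z" "mgood A z"
  shows "mgood M z"
  by (rule mgood_cong[OF assms(1)]) (intro mgood_mult mgood_shift assms(2-4))

lemma step_left:
  fixes M Ai A :: "complex \<Rightarrow> complex^'n::finite^'n"
  assumes "\<forall>\<^sub>F u in at (z-1). M (u+1) = A u ** M u ** Ai u" "mgood M (z-1)" "mgood A (z-1)" "mgood Ai (z-1)"
  shows "mgood M z"
proof -
  have "mgood (\<lambda>u. M (u+1)) (z-1)"
    by (rule mgood_cong[OF assms(1)]) (intro mgood_mult assms(2-4))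
  then have "mgood (\<lambda>u. M (u+1)) (z + (-1))" by simp
  from mgood_shift[OF this] show ?thesis by simp
qed

lemma chain_right:
  fixes M :: "complex \<Rightarrow> complex^'n::finite^'n"
  assumes step: "\<And>w. w \<notin> Bad \<Longrightarrow> mgood M (w+1) \<Longrightarrow> mgood M w"
  shows "mgood M (z + of_nat m) \<Longrightarrow> (\<forall>k<m. z + of_nat k \<notin> Bad) \<Longrightarrow> mgood M z"
proof (induction m arbitrary: z)
  case 0 then show ?case by simp
next
  case (Suc m)
  have "mgood M (z + 1)"
    by (rule Suc.IH) (use Suc.prems in \<open>auto simp: add_ac\<close>)
  moreover have "z \<notin> Bad" using Suc.prems(2)[rule_format, of 0] by simp
  ultimately show ?case using step by blast
qed

lemma chain_left:
  fixes M :: "complex \<Rightarrow> complex^'n::finite^'n"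
  assumes step: "\<And>w. w - 1 \<notin> Bad \<Longrightarrow> mgood M (w - 1) \<Longrightarrow> mgood M w"
  shows "mgood M (z - of_nat m) \<Longrightarrow> (\<forall>k<m. z - of_nat k - 1 \<notin> Bad) \<Longrightarrow> mgood M z"
proof (induction m arbitrary: z)
  case 0 then show ?case by simp
next
  case (Suc m)
  have "mgood M (z - 1)"
  proof (rule Suc.IH)
    show "mgood M (z - 1 - of_nat m)" using Suc.prems(1) by (simp add: algebra_simps)
    show "\<forall>k<m. z - 1 - of_nat k - 1 \<notin> Bad"
    proof (intro allI impI)
      fix k assume "k < m"
      then have "Suc k < Suc m" by simp
      then have "z - of_nat (Suc k) - 1 \<notin> Bad" using Suc.prems(2) by blast
      moreover have "z - of_nat (Suc k) - 1 = z - 1 - of_nat k - 1" by (simp add: algebra_simps)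
      ultimately show "z - 1 - of_nat k - 1 \<notin> Bad" by simp
    qed
  qed
  moreover have "z - 1 \<notin> Bad" using Suc.prems(2)[rule_format, of 0] by simp
  ultimately show ?case using step by blast
qed

lemma good_everywhere:
  assumes "\<And>z. good f z"
  shows "remove_sings f analytic_on UNIV" "\<And>z. (f \<longlongrightarrow> remove_sings f z) (at z)"
proof -
  have *: "isolated_singularity_at f z \<and> (f \<longlongrightarrow> remove_sings f z) (at z)
            \<and> remove_sings f analytic_on {z}" for z
  proof -
    from assms[of z] obtain g where g: "g analytic_on {z}" "\<forall>\<^sub>F u in at z. f u = g u"
      unfolding good_def by blast
    have iso: "isolated_singularity_at f z"
      using isolated_singularity_at_cong[OF g(2) refl] isolated_singularity_at_analytic[OF g(1)] by blast
    have lim: "(f \<longlongrightarrow> g z) (at z)"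
      using analytic_at_imp_isCont[OF g(1)] g(2)
      by (metis (mono_tags, lifting) eventually_mono isContD tendsto_cong)
    have "remove_sings f z = g z" using lim by (rule remove_sings_eqI)
    then show ?thesis using iso lim remove_sings_analytic_at[OF iso lim] by simp
  qed
  show "remove_sings f analytic_on UNIV" using * analytic_on_analytic_at by blast
  show "\<And>z. (f \<longlongrightarrow> remove_sings f z) (at z)" using * by blast
qed

lemma rational_agree:
  assumes "rational_fun f" "rational_fun g" "\<forall>\<^sub>F u in at z0. f u = g u"
  shows "finite {u. f u \<noteq> g u}"
proof -
  from assms(1) obtain p q where pq: "q \<noteq> 0" "\<And>u. poly q u \<noteq> 0 \<Longrightarrow> f u = poly p u / poly q u"
    unfolding rational_fun_def by blast
  from assms(2) obtain p' q' where pq': "q' \<noteq> 0" "\<And>u. poly q' u \<noteq> 0 \<Longrightarrow> g u = poly p' u / poly q' u"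
    unfolding rational_fun_def by blast
  have fq: "finite {u. poly q u = 0}" using pq(1) by (rule poly_roots_finite)
  have fq': "finite {u. poly q' u = 0}" using pq'(1) by (rule poly_roots_finite)
  define r where "r = p * q' - p' * q"
  have ev: "\<forall>\<^sub>F u in at z0. poly r u = 0"
    using assms(3) ev_not_in_finite[OF fq, of z0] ev_not_in_finite[OF fq', of z0]
  proof eventually_elim
    case (elim u)
    then have "poly p u / poly q u = poly p' u / poly q' u" using pq pq' by auto
    then show ?case using elim by (simp add: r_def field_simps)
  qed
  have "r = 0"
  proof (rule ccontr)
    assume "r \<noteq> 0"
    then have "finite {u. poly r u = 0}" by (rule poly_roots_finite)
    from ev_not_in_finite[OF this, of z0] ev have "\<forall>\<^sub>F u in at z0. False"
      by eventually_elim auto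
    then show False by (simp add: eventually_False)
  qed
  have "{u. f u \<noteq> g u} \<subseteq> {u. poly q u = 0} \<union> {u. poly q' u = 0}"
  proof
    fix u assume u: "u \<in> {u. f u \<noteq> g u}"
    show "u \<in> {u. poly q u = 0} \<union> {u. poly q' u = 0}"
    proof (rule ccontr)
      assume "u \<notin> {u. poly q u = 0} \<union> {u. poly q' u = 0}"
      then have h: "poly q u \<noteq> 0" "poly q' u \<noteq> 0" by auto
      have "poly r u = 0" using \<open>r = 0\<close> by simp
      then have "poly p u * poly q' u = poly p' u * poly q u" by (simp add: r_def)
      then have "poly p u / poly q u = poly p' u / poly q' u" using h by (simp add: field_simps)
      then show False using u h pq pq' by auto
    qed
  qed
  then show ?thesis using fq fq' finite_subset by blast
qed



lemma plus_extract:
  fixes \<phi> :: "complex \<Rightarrow> complex^'n::finite^'n"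
  assumes "canonical_plus A A0 \<phi>"
  shows "mat_meromorphic \<phi>" "\<And>z. \<forall>\<^sub>F u in at z. \<phi> (u+1) = A u ** \<phi> u"
    "\<exists>c. (\<forall>i j. (\<lambda>u. \<phi> u $ i $ j) holomorphic_on {u. Re u > c}) \<and> (\<forall>u. Re u > c \<longrightarrow> invertible (\<phi> u))"
    "\<And>b. \<exists>C R. \<forall>u. norm u \<ge> R \<and> Re u > b \<longrightarrow>
        norm (\<phi> u ** mexp (smat (- Ln u) A0) - mat 1) \<le> C / norm u"
proof -
  show "mat_meromorphic \<phi>" "\<And>z. \<forall>\<^sub>F u in at z. \<phi> (u+1) = A u ** \<phi> u"
    using assms unfolding canonical_plus_def solves_diff_eq_def mero_eq_def by auto
  show "\<exists>c. (\<forall>i j. (\<lambda>u. \<phi> u $ i $ j) holomorphic_on {u. Re u > c}) \<and> (\<forall>u. Re u > c \<longrightarrow> invertible (\<phi> u))"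
    using assms unfolding canonical_plus_def by blast
  fix b
  from assms obtain H :: "nat \<Rightarrow> complex^'n^'n" where H: "\<forall>c N. \<exists>C. \<forall>\<^sub>F u in inf at_infinity (principal {u. Re u > c}).
          norm (\<phi> u ** mexp (smat (- Ln u) A0)
                - (mat 1 + (\<Sum>k<N. smat (1 / u ^ (k + 1)) (H k)))) \<le> C / norm u ^ (N + 1)"
    unfolding canonical_plus_def by blast
  from H obtain C where "\<forall>\<^sub>F u in inf at_infinity (principal {u. Re u > b}).
          norm (\<phi> u ** mexp (smat (- Ln u) A0) - (mat 1 + (\<Sum>k<0. smat (1 / u ^ (k + 1)) (H k)))) \<le> C / norm u ^ (0 + 1)"
    by blast
  then have "\<forall>\<^sub>F u in at_infinity. u \<in> {u. Re u > b} \<longrightarrow> norm (\<phi> u ** mexp (smat (- Ln u) A0) - mat 1) \<le> C / norm u"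
    by (simp add: eventually_inf_principal)
  then obtain R where "\<forall>u. R \<le> norm u \<longrightarrow> u \<in> {u. Re u > b} \<longrightarrow> norm (\<phi> u ** mexp (smat (- Ln u) A0) - mat 1) \<le> C / norm u"
    unfolding eventually_at_infinity by blast
  then show "\<exists>C R. \<forall>u. norm u \<ge> R \<and> Re u > b \<longrightarrow>
        norm (\<phi> u ** mexp (smat (- Ln u) A0) - mat 1) \<le> C / norm u" by auto
qed

lemma minus_extract:
  fixes \<phi> :: "complex \<Rightarrow> complex^'n::finite^'n"
  assumes "canonical_minus A A0 \<phi>"
  shows "mat_meromorphic \<phi>" "\<And>z. \<forall>\<^sub>F u in at z. \<phi> (u+1) = A u ** \<phi> u"
    "\<exists>c. (\<forall>i j. (\<lambda>u. \<phi> u $ i $ j) holomorphic_on {u. Re u < c}) \<and> (\<forall>u. Re u < c \<longrightarrow> invertible (\<phi> u))"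
    "\<And>b. \<exists>C R. \<forall>u. norm u \<ge> R \<and> Re u < b \<longrightarrow>
        norm (\<phi> u ** mexp (smat (- Ln (- u)) A0) - mat 1) \<le> C / norm u"
proof -
  show "mat_meromorphic \<phi>" "\<And>z. \<forall>\<^sub>F u in at z. \<phi> (u+1) = A u ** \<phi> u"
    using assms unfolding canonical_minus_def solves_diff_eq_def mero_eq_def by auto
  show "\<exists>c. (\<forall>i j. (\<lambda>u. \<phi> u $ i $ j) holomorphic_on {u. Re u < c}) \<and> (\<forall>u. Re u < c \<longrightarrow> invertible (\<phi> u))"
    using assms unfolding canonical_minus_def by blast
  fix b
  from assms obtain H :: "nat \<Rightarrow> complex^'n^'n" where H: "\<forall>c N. \<exists>C. \<forall>\<^sub>F u in inf at_infinity (principal {u. Re u < c}).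
          norm (\<phi> u ** mexp (smat (- Ln (- u)) A0)
                - (mat 1 + (\<Sum>k<N. smat (1 / u ^ (k + 1)) (H k)))) \<le> C / norm u ^ (N + 1)"
    unfolding canonical_minus_def by blast
  from H obtain C where "\<forall>\<^sub>F u in inf at_infinity (principal {u. Re u < b}).
          norm (\<phi> u ** mexp (smat (- Ln (- u)) A0) - (mat 1 + (\<Sum>k<0. smat (1 / u ^ (k + 1)) (H k)))) \<le> C / norm u ^ (0 + 1)"
    by blast
  then have "\<forall>\<^sub>F u in at_infinity. u \<in> {u. Re u < b} \<longrightarrow> norm (\<phi> u ** mexp (smat (- Ln (- u)) A0) - mat 1) \<le> C / norm u"
    by (simp add: eventually_inf_principal)
  then obtain R where "\<forall>u. R \<le> norm u \<longrightarrow> u \<in> {u. Re u < b} \<longrightarrow> norm (\<phi> u ** mexp (smat (- Ln (- u)) A0) - mat 1) \<le> C / norm u"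
    unfolding eventually_at_infinity by blast
  then show "\<exists>C R. \<forall>u. norm u \<ge> R \<and> Re u < b \<longrightarrow>
        norm (\<phi> u ** mexp (smat (- Ln (- u)) A0) - mat 1) \<le> C / norm u" by auto
qed

lemma bound_pair:
  fixes P Q :: "complex \<Rightarrow> complex^'n::finite^'n" and X :: "complex \<Rightarrow> complex^'n^'n"
  assumes "\<forall>u. norm u \<ge> R1 \<and> Reg u \<longrightarrow> norm (P u ** X u - mat 1) \<le> C1 / norm u"
    "\<forall>u. norm u \<ge> R2 \<and> Reg u \<longrightarrow> norm (Q u ** X u - mat 1) \<le> C2 / norm u"
  shows "\<exists>C R. \<forall>u. norm u \<ge> R \<and> Reg u \<and> invertible (P u) \<longrightarrow> norm (Q u ** matrix_inv (P u) - mat 1) \<le> C / norm u"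
proof -
  define K where "K = real (CARD('n))^3"
  define R where "R = max (max R1 R2) (2 * K * \<bar>C1\<bar> + 1)"
  define C where "C = 2 * (C2 + K * norm (mat 1 :: complex^'n^'n) * C1)"
  have K0: "K \<ge> 0" by (simp add: K_def)
  have "norm (Q u ** matrix_inv (P u) - mat 1) \<le> C / norm u"
    if u: "norm u \<ge> R" "Reg u" "invertible (P u)" for u
  proof -
    have "2 * K * \<bar>C1\<bar> \<ge> 0" using K0 by simp
    then have nu: "norm u > 0" "norm u \<ge> 2 * K * \<bar>C1\<bar>" using u(1) unfolding R_def by auto
    have b1: "norm (P u ** X u - mat 1) \<le> C1 / norm u" using assms(1) u unfolding R_def by auto
    have b2: "norm (Q u ** X u - mat 1) \<le> C2 / norm u" using assms(2) u unfolding R_def by auto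
    have "K * (C1 / norm u) \<le> K * \<bar>C1\<bar> / norm u" using K0 nu
      by (simp add: divide_right_mono mult_left_mono)
    also have "\<dots> \<le> 1/2" using nu K0 by (simp add: divide_le_eq)
    finally have "K * (C1 / norm u) \<le> 1/2" .
    then have "norm (Q u ** matrix_inv (P u) - mat 1) \<le> 2 * (C2 / norm u + K * norm (mat 1 :: complex^'n^'n) * (C1 / norm u))"
      using alg_bound[OF u(3) b1 b2] unfolding K_def by blast
    also have "\<dots> = C / norm u" unfolding C_def using nu(1) by (simp add: field_simps)
    finally show ?thesis .
  qed
  then show ?thesis by blast
qed



lemma small_div: "(e::real) > 0 \<Longrightarrow> x > 0 \<Longrightarrow> x \<ge> \<bar>C\<bar> / e \<Longrightarrow> C / x \<le> e"
  by (smt (verit, ccfv_SIG) divide_le_eq mult.commute pos_divide_le_eq)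

theorem proposition4p11:
  fixes A A' :: "complex \<Rightarrow> complex ^ 'n ^ 'n" and A0 :: "complex ^ 'n ^ 'n"
  assumes "rational_GL A" and "rational_GL A'"
    and "normalized_at_infty A A0" and "normalized_at_infty A' A0"
    and "canonical_plus A A0 \<phi>p" and "canonical_minus A A0 \<phi>m"
    and "canonical_plus A' A0 \<phi>p'" and "canonical_minus A' A0 \<phi>m'"
    and "mero_eq (connection \<phi>p \<phi>m) (connection \<phi>p' \<phi>m')"
    and "noncongruent (poles_mat (\<lambda>u. matrix_inv (A u))) (poles_mat A)"
    and "noncongruent (poles_mat (\<lambda>u. matrix_inv (A' u))) (poles_mat A')"
    and "noncongruent (poles_mat (\<lambda>u. matrix_inv (A u))) (poles_mat (\<lambda>u. matrix_inv (A' u)))"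
    and "noncongruent (poles_mat A) (poles_mat A')"
  shows "finite {u. A u \<noteq> A' u}"
proof -
  note P = plus_extract[OF assms(5)]
  note R = minus_extract[OF assms(6)]
  note Q = plus_extract[OF assms(7)]
  note T = minus_extract[OF assms(8)]
  obtain cP where cP: "\<And>i j. (\<lambda>u. \<phi>p u $ i $ j) holomorphic_on {u. Re u > cP}" "\<And>u. Re u > cP \<Longrightarrow> invertible (\<phi>p u)"
    using P(3) by blast
  obtain cQ where cQ: "\<And>i j. (\<lambda>u. \<phi>p' u $ i $ j) holomorphic_on {u. Re u > cQ}" "\<And>u. Re u > cQ \<Longrightarrow> invertible (\<phi>p' u)"
    using Q(3) by blast
  obtain cR where cR: "\<And>i j. (\<lambda>u. \<phi>m u $ i $ j) holomorphic_on {u. Re u < cR}" "\<And>u. Re u < cR \<Longrightarrow> invertible (\<phi>m u)"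
    using R(3) by blast
  obtain cT where cT: "\<And>i j. (\<lambda>u. \<phi>m' u $ i $ j) holomorphic_on {u. Re u < cT}" "\<And>u. Re u < cT \<Longrightarrow> invertible (\<phi>m' u)"
    using T(3) by blast
  define c1 where "c1 = max cP cQ"
  define c2 where "c2 = min cR cT"
  have evP: "\<And>z. \<forall>\<^sub>F u in at z. invertible (\<phi>p u)"
    by (rule ev_invertible[of _ "{u. Re u > cP}" "of_real (cP + 1)"])
       (use P(1) cP(2) in \<open>auto simp: mat_meromorphic_def open_halfspace_Re_gt\<close>)
  have evQ: "\<And>z. \<forall>\<^sub>F u in at z. invertible (\<phi>p' u)"
    by (rule ev_invertible[of _ "{u. Re u > cQ}" "of_real (cQ + 1)"])
       (use Q(1) cQ(2) in \<open>auto simp: mat_meromorphic_def open_halfspace_Re_gt\<close>)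
  have evR: "\<And>z. \<forall>\<^sub>F u in at z. invertible (\<phi>m u)"
    by (rule ev_invertible[of _ "{u. Re u < cR}" "of_real (cR - 1)"])
       (use R(1) cR(2) in \<open>auto simp: mat_meromorphic_def open_halfspace_Re_lt\<close>)
  have evT: "\<And>z. \<forall>\<^sub>F u in at z. invertible (\<phi>m' u)"
    by (rule ev_invertible[of _ "{u. Re u < cT}" "of_real (cT - 1)"])
       (use T(1) cT(2) in \<open>auto simp: mat_meromorphic_def open_halfspace_Re_lt\<close>)
  have evA: "\<And>z. \<forall>\<^sub>F u in at z. invertible (A u)" by (rule rational_GL_ev_inv[OF assms(1)])
  have evA': "\<And>z. \<forall>\<^sub>F u in at z. invertible (A' u)" by (rule rational_GL_ev_inv[OF assms(2)])

  define M where "M = (\<lambda>u. \<phi>p' u ** matrix_inv (\<phi>p u))"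

  have rec: "\<forall>\<^sub>F u in at z. M (u+1) = A' u ** M u ** matrix_inv (A u) \<and>
                            M u = matrix_inv (A' u) ** M (u+1) ** A u" for z
  proof -
    have "\<forall>\<^sub>F u in at z. invertible (\<phi>p (u + 1))"
      by (rule ev_shift) (rule evP)
    with P(2)[of z] Q(2)[of z] evP[of z] evA[of z] evA'[of z]
    show ?thesis
    proof eventually_elim
      case (elim u)
      then show ?case using alg_rec[of "\<phi>p u" "\<phi>p (u+1)" "A u" "A' u" "\<phi>p' (u+1)" "\<phi>p' u"]
        unfolding M_def by blast
    qed
  qed

  have Mleft: "\<forall>\<^sub>F u in at z. M u = \<phi>m' u ** matrix_inv (\<phi>m u)" for z
  proof -
    have "\<forall>\<^sub>F u in at z. connection \<phi>p \<phi>m u = connection \<phi>p' \<phi>m' u"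
      using assms(9) unfolding mero_eq_def by blast
    with evP[of z] evQ[of z] evR[of z] show ?thesis
    proof eventually_elim
      case (elim u)
      then show ?case using alg_conn[of "\<phi>p u" "\<phi>p' u" "\<phi>m u" "\<phi>m' u"]
        unfolding M_def connection_def by blast
    qed
  qed

  have Mhol: "(\<lambda>u. M u $ i $ j) holomorphic_on {u. Re u > c1}" for i j
    unfolding M_def
  proof (rule matprod_holo)
    show "(\<lambda>u. \<phi>p' u $ i $ j) holomorphic_on {u. Re u > c1}" for i j
      by (rule holomorphic_on_subset[OF cQ(1)]) (auto simp: c1_def)
    show "(\<lambda>u. matrix_inv (\<phi>p u) $ i $ j) holomorphic_on {u. Re u > c1}" for i j
      by (rule inv_holo) (auto intro: holomorphic_on_subset[OF cP(1)] cP(2) simp: c1_def)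
  qed

  have good_right: "mgood M z" if "Re z > c1" for z
    by (rule mgood_analytic, rule holomorphic_on_imp_analytic_at[OF Mhol])
       (use that in \<open>auto simp: open_halfspace_Re_gt\<close>)

  have good_left: "mgood M z" if "Re z < c2" for z
  proof (rule mgood_cong[OF Mleft])
    have "(\<lambda>u. (\<phi>m' u ** matrix_inv (\<phi>m u)) $ i $ j) holomorphic_on {u. Re u < c2}" for i j
    proof (rule matprod_holo)
      show "(\<lambda>u. \<phi>m' u $ i $ j) holomorphic_on {u. Re u < c2}" for i j
        by (rule holomorphic_on_subset[OF cT(1)]) (auto simp: c2_def)
      show "(\<lambda>u. matrix_inv (\<phi>m u) $ i $ j) holomorphic_on {u. Re u < c2}" for i j
        by (rule inv_holo) (auto intro: holomorphic_on_subset[OF cR(1)] cR(2) simp: c2_def)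
    qed
    then show "mgood (\<lambda>u. \<phi>m' u ** matrix_inv (\<phi>m u)) z"
      by (intro mgood_analytic holomorphic_on_imp_analytic_at[of _ "{u. Re u < c2}"])
         (use that in \<open>auto simp: open_halfspace_Re_lt\<close>)
  qed

  define Zs where "Zs = poles_mat (\<lambda>u. matrix_inv (A u))"
  define Ps where "Ps = poles_mat A"
  define Zs' where "Zs' = poles_mat (\<lambda>u. matrix_inv (A' u))"
  define Ps' where "Ps' = poles_mat A'"

  have stepR: "mgood M w" if "w \<notin> Zs' \<union> Ps" "mgood M (w+1)" for w
  proof (rule step_right[where z=w and M=M and Ai="\<lambda>u. matrix_inv (A' u)" and A=A])
    show "\<forall>\<^sub>F u in at w. M u = matrix_inv (A' u) ** M (u + 1) ** A u"
      using rec[of w] by (rule eventually_mono) blast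
    show "mgood M (w + 1)" by fact
    show "mgood (\<lambda>u. matrix_inv (A' u)) w"
      by (rule mgood_nopole) (use rational_GL_inv_mero[OF assms(2)] that in \<open>auto simp: Zs'_def\<close>)
    show "mgood A w"
      by (rule mgood_nopole) (use rational_GL_mero[OF assms(1)] that in \<open>auto simp: Ps_def\<close>)
  qed

  have stepL: "mgood M w" if "w - 1 \<notin> Ps' \<union> Zs" "mgood M (w - 1)" for w
  proof (rule step_left[where z=w and M=M and A=A' and Ai="\<lambda>u. matrix_inv (A u)"])
    show "\<forall>\<^sub>F u in at (w - 1). M (u + 1) = A' u ** M u ** matrix_inv (A u)"
      using rec[of "w - 1"] by (rule eventually_mono) blast
    show "mgood M (w - 1)" by fact
    show "mgood (\<lambda>u. matrix_inv (A u)) (w - 1)"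
      by (rule mgood_nopole) (use rational_GL_inv_mero[OF assms(1)] that in \<open>auto simp: Zs_def\<close>)
    show "mgood A' (w - 1)"
      by (rule mgood_nopole) (use rational_GL_mero[OF assms(2)] that in \<open>auto simp: Ps'_def\<close>)
  qed

  have allgood: "mgood M z" for z
  proof (rule ccontr)
    assume ng: "\<not> mgood M z"
    define m where "m = nat \<lceil>c1 - Re z\<rceil> + 1"
    have "c1 - Re z \<le> real (nat \<lceil>c1 - Re z\<rceil>)" by (rule real_nat_ceiling_ge)
    then have "Re (z + of_nat m) > c1" by (simp add: m_def)
    then have "mgood M (z + of_nat m)" by (rule good_right)
    then have "\<not> (\<forall>k<m. z + of_nat k \<notin> Zs' \<union> Ps)"
      using chain_right[where Bad="Zs' \<union> Ps" and M=M and z=z and m=m] stepR ng by blast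
    then obtain k where k: "z + of_nat k \<in> Zs' \<union> Ps" by blast
    define m' where "m' = nat \<lceil>Re z - c2\<rceil> + 1"
    have "Re z - c2 \<le> real (nat \<lceil>Re z - c2\<rceil>)" by (rule real_nat_ceiling_ge)
    then have "Re (z - of_nat m') < c2" by (simp add: m'_def)
    then have "mgood M (z - of_nat m')" by (rule good_left)
    then have "\<not> (\<forall>k<m'. z - of_nat k - 1 \<notin> Ps' \<union> Zs)"
      using chain_left[where Bad="Ps' \<union> Zs" and M=M and z=z and m=m'] stepL ng by blast
    then obtain k' where k': "z - of_nat k' - 1 \<in> Ps' \<union> Zs" by blast
    define a where "a = z + of_nat k"
    define b where "b = z - of_nat k' - 1"
    have e: "a - b = of_nat (k + k' + 1)" by (simp add: a_def b_def)
    have i1: "a - b \<in> \<int>" unfolding e by (rule Ints_of_nat)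
    have n1: "a - b \<noteq> 0" unfolding e by (simp only: of_nat_eq_0_iff)
    have "b - a = - (a - b)" by simp
    then have i2: "b - a \<in> \<int>" "b - a \<noteq> 0" using Ints_minus[OF i1] n1 by auto
    have ab: "a - b \<in> \<int> - {0}" "b - a \<in> \<int> - {0}" using i1 n1 i2 by auto
    have "a \<in> Zs' \<union> Ps" "b \<in> Ps' \<union> Zs" using k k' by (auto simp: a_def b_def)
    then show False
      using assms(10-13) ab unfolding noncongruent_def Zs_def Ps_def Zs'_def Ps'_def by blast
  qed

  define G where "G = (\<lambda>u. \<chi> i j. remove_sings (\<lambda>w. M w $ i $ j) u)"
  have gd: "good (\<lambda>w. M w $ i $ j) z" for i j z using allgood[of z] unfolding mgood_def by blast
  have Gan: "(\<lambda>u. G u $ i $ j) analytic_on UNIV" for i j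
    using good_everywhere(1)[OF gd[of i j]] by (simp add: G_def)
  have Glim: "(M \<longlongrightarrow> G z) (at z)" for z
  proof -
    have "((\<lambda>w. \<chi> i j. M w $ i $ j) \<longlongrightarrow> (\<chi> i j. remove_sings (\<lambda>w. M w $ i $ j) z)) (at z)"
      by (intro tendsto_vec_lambda good_everywhere(2) gd)
    then show ?thesis by (simp add: G_def)
  qed

  obtain CP1 RP1 where bP: "\<forall>u. norm u \<ge> RP1 \<and> Re u > c2 - 1 \<longrightarrow>
        norm (\<phi>p u ** mexp (smat (- Ln u) A0) - mat 1) \<le> CP1 / norm u" using P(4) by blast
  obtain CQ1 RQ1 where bQ: "\<forall>u. norm u \<ge> RQ1 \<and> Re u > c2 - 1 \<longrightarrow>
        norm (\<phi>p' u ** mexp (smat (- Ln u) A0) - mat 1) \<le> CQ1 / norm u" using Q(4) by blast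
  obtain CR1 RR1 where bR: "\<forall>u. norm u \<ge> RR1 \<and> Re u < c2 \<longrightarrow>
        norm (\<phi>m u ** mexp (smat (- Ln (- u)) A0) - mat 1) \<le> CR1 / norm u" using R(4) by blast
  obtain CT1 RT1 where bT: "\<forall>u. norm u \<ge> RT1 \<and> Re u < c2 \<longrightarrow>
        norm (\<phi>m' u ** mexp (smat (- Ln (- u)) A0) - mat 1) \<le> CT1 / norm u" using T(4) by blast
  obtain Cp Rp where bp: "\<forall>u. norm u \<ge> Rp \<and> Re u > c2 - 1 \<and> invertible (\<phi>p u) \<longrightarrow>
        norm (\<phi>p' u ** matrix_inv (\<phi>p u) - mat 1) \<le> Cp / norm u"
    using bound_pair[where Reg="\<lambda>u. Re u > c2 - 1", OF bP bQ] by blast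
  obtain Cm Rm where bm: "\<forall>u. norm u \<ge> Rm \<and> Re u < c2 \<and> invertible (\<phi>m u) \<longrightarrow>
        norm (\<phi>m' u ** matrix_inv (\<phi>m u) - mat 1) \<le> Cm / norm u"
    using bound_pair[where Reg="\<lambda>u. Re u < c2", OF bR bT] by blast

  have Gbound: "\<forall>\<^sub>F u in at_infinity. norm (G u - mat 1) \<le> e" if e: "e > 0" for e
  proof -
    define Rb where "Rb = max (max Rp Rm) 0 + \<bar>Cp\<bar> / e + \<bar>Cm\<bar> / e + 1"
    have nn: "\<bar>Cp\<bar> / e \<ge> 0" "\<bar>Cm\<bar> / e \<ge> 0" using e by auto
    have opn: "open {w::complex. Rb - 1 < norm w}" by (intro open_Collect_less continuous_intros)
    have Rb1: "Rb - 1 \<ge> max Rp Rm" "Rb - 1 \<ge> \<bar>Cp\<bar> / e" "Rb - 1 \<ge> \<bar>Cm\<bar> / e"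
      using nn unfolding Rb_def by auto
    have "norm (G u - mat 1) \<le> e" if u: "Rb \<le> norm u" for u
    proof -
      have ev: "\<forall>\<^sub>F w in at u. norm (M w - mat 1) \<le> e"
      proof (cases "Re u > c2 - 1")
        case True
        define U where "U = {w. Re w > c2 - 1} \<inter> {w::complex. Rb - 1 < norm w}"
        have "open U" unfolding U_def by (intro open_Int opn open_halfspace_Re_gt)
        moreover have "u \<in> U" using True u unfolding U_def by auto
        ultimately have "\<forall>\<^sub>F w in at u. w \<in> U" by (rule eventually_at_in_open')
        with evP[of u] show ?thesis
        proof eventually_elim
          case (elim w)
          have w: "norm w > Rb - 1" "Re w > c2 - 1" using elim unfolding U_def by auto
          then have "norm w \<ge> Rp" "norm w \<ge> \<bar>Cp\<bar> / e" using Rb1 by auto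
          then have "norm (M w - mat 1) \<le> Cp / norm w" using bp w elim unfolding M_def by blast
          also have "\<dots> \<le> e" using small_div[OF e _ \<open>norm w \<ge> \<bar>Cp\<bar> / e\<close>] w Rb1 e
            by (smt (verit) divide_nonneg_pos abs_ge_zero)
          finally show ?case .
        qed
      next
        case False
        define U where "U = {w. Re w < c2} \<inter> {w::complex. Rb - 1 < norm w}"
        have "open U" unfolding U_def by (intro open_Int opn open_halfspace_Re_lt)
        moreover have "u \<in> U" using False u unfolding U_def by auto
        ultimately have "\<forall>\<^sub>F w in at u. w \<in> U" by (rule eventually_at_in_open')
        with Mleft[of u] show ?thesis
        proof eventually_elim
          case (elim w)
          have w: "norm w > Rb - 1" "Re w < c2" using elim unfolding U_def by auto
          then have "norm w \<ge> Rm" "norm w \<ge> \<bar>Cm\<bar> / e" using Rb1 by auto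
          moreover have "invertible (\<phi>m w)" using w cR(2) by (auto simp: c2_def)
          ultimately have "norm (M w - mat 1) \<le> Cm / norm w" using bm w elim by auto
          also have "\<dots> \<le> e" using small_div[OF e _ \<open>norm w \<ge> \<bar>Cm\<bar> / e\<close>] w Rb1 e
            by (smt (verit) divide_nonneg_pos abs_ge_zero)
          finally show ?case .
        qed
      qed
      have "((\<lambda>w. norm (M w - mat 1)) \<longlongrightarrow> norm (G u - mat 1)) (at u)"
        by (intro tendsto_intros Glim)
      then show ?thesis using ev by (rule tendsto_upperbound) simp
    qed
    then show ?thesis unfolding eventually_at_infinity by blast
  qed

  have Ginf: "(G \<longlongrightarrow> mat 1) at_infinity"
    unfolding tendsto_iff
  proof (intro allI impI)
    fix e :: real assume "e > 0"
    then have "\<forall>\<^sub>F u in at_infinity. norm (G u - mat 1) \<le> e / 2" by (intro Gbound) simp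
    then show "\<forall>\<^sub>F u in at_infinity. dist (G u) (mat 1) < e"
      by eventually_elim (use \<open>e > 0\<close> in \<open>auto simp: dist_norm\<close>)
  qed
  have G1: "G u = mat 1" for u
  proof -
    have "G u $ i $ j = (mat 1 :: complex^'n^'n) $ i $ j" for i j
    proof -
      have h: "(\<lambda>u. G u $ i $ j) holomorphic_on UNIV" using Gan analytic_imp_holomorphic by blast
      have l: "((\<lambda>u. G u $ i $ j) \<longlongrightarrow> (mat 1 :: complex^'n^'n) $ i $ j) at_infinity"
        by (intro tendsto_vec_nth Ginf)
      show ?thesis using Liouville_weak[OF h l, of u] by simp
    qed
    then show ?thesis by (simp add: vec_eq_iff)
  qed

  have M1: "M z = mat 1" if "Re z > c1" for z
  proof -
    have "M z $ i $ j = G z $ i $ j" for i j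
    proof -
      have "(\<lambda>u. M u $ i $ j) analytic_on {z}"
        by (rule holomorphic_on_imp_analytic_at[OF Mhol]) (use that in \<open>auto simp: open_halfspace_Re_gt\<close>)
      then show ?thesis by (simp add: G_def)
    qed
    then show ?thesis using G1[of z] by (simp add: vec_eq_iff)
  qed
  have PQ: "\<phi>p' z = \<phi>p z" if "Re z > c1" for z
  proof -
    have inv: "invertible (\<phi>p z)" using cP(2) that by (auto simp: c1_def)
    have "\<phi>p' z = \<phi>p' z ** (matrix_inv (\<phi>p z) ** \<phi>p z)" using inv_props(2)[OF inv] by simp
    also have "\<dots> = M z ** \<phi>p z" by (simp add: M_def matrix_mul_assoc)
    also have "\<dots> = \<phi>p z" using M1[OF that] by simp
    finally show ?thesis .
  qed

  define z0 where "z0 = complex_of_real (c1 + 1)"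
  have evAA: "\<forall>\<^sub>F u in at z0. A u = A' u"
  proof -
    have "\<forall>\<^sub>F u in at z0. u \<in> {u. Re u > c1}"
      by (rule eventually_at_in_open') (auto simp: z0_def open_halfspace_Re_gt)
    with P(2)[of z0] Q(2)[of z0] evP[of z0] show ?thesis
    proof eventually_elim
      case (elim u)
      then have "Re u > c1" "Re (u + 1) > c1" by auto
      then have e1: "\<phi>p' u = \<phi>p u" "\<phi>p' (u+1) = \<phi>p (u+1)" using PQ by auto
      have "A u ** \<phi>p u = A' u ** \<phi>p u" using elim e1 by metis
      then have "A u = (A' u ** \<phi>p u) ** matrix_inv (\<phi>p u)" "A' u = (A' u ** \<phi>p u) ** matrix_inv (\<phi>p u)"
        using right_inv_unique[OF elim(3)] by blast+
      then show ?case by simp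
    qed
  qed
  have fin: "finite {u. A u $ i $ j \<noteq> A' u $ i $ j}" for i j
  proof (rule rational_agree)
    show "rational_fun (\<lambda>u. A u $ i $ j)" using assms(1) unfolding rational_GL_def by blast
    show "rational_fun (\<lambda>u. A' u $ i $ j)" using assms(2) unfolding rational_GL_def by blast
    show "\<forall>\<^sub>F u in at z0. A u $ i $ j = A' u $ i $ j" using evAA by eventually_elim simp
  qed
  have "{u. A u \<noteq> A' u} = (\<Union>i. \<Union>j. {u. A u $ i $ j \<noteq> A' u $ i $ j})"
    by (auto simp: vec_eq_iff)
  then show ?thesis using fin by simp
qed

end
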